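(* For $k\ge1$, the linear simplex $\beta$ code $\mathcal{S}_k^\beta$ has type $\left(q^{(s-1)(k-1)}\frac{q^k-1}{q-1};k,0,\dots,0\right)$.
   Context: Let $R$ be a finite commutative chain ring with maximal ideal $\langle\gamma\rangle$, nilpotency index $s$ and residue field $R/\langle\gamma\rangle\cong\mathbb{F}_q$. Fix coset representatives $T=\{e_0,\dots,e_{q-1}\}$ with $e_0=0,e_1=1$, ordered $e_0<\dots<e_{q-1}$; each $r\in R$ is uniquely $\sum_{i=0}^{s-1}r_i\gamma^i$, $r_i\in T$; order $R$ by $x>y$ iff $x_i>y_i$ in $T$ for the largest $i$ with $x_i\neq y_i$; list $R=\{\rho_0,\dots,\rho_{q^s-1}\}$ increasingly. $\mathbf{a}^{(m)}$ is the constant vector of length $m$. Define $G_1^\alpha=(\rho_0\ \cdots\ \rho_{q^s-1})$ and, for $k>1$, $G_k^\alpha$ as the matrix of $q^s$ column blocks, the $j$-th having first row $\boldsymbol{\rho_j}^{(q^{s(k-1)})}$ and $G_{k-1}^\alpha$ below. List $\langle\gamma\rangle$ increasingly as $a_0\gamma<\dots<a_{q^{s-1}-1}\gamma$. Define $G_1^\beta=(1)$ and, for $k>1$, $G_k^\beta$ as the matrix with column blocks: first a block with first row $\mathbf{1}^{(q^{s(k-1)})}$ and $G_{k-1}^\alpha$ below; then for each $j=0,\dots,q^{s-1}-1$ a block with first row the constant vector with entry $a_j\gamma$ and $G_{k-1}^\beta$ below. $\mathcal{S}_k^\beta$ is the $R$-submodule generated by the rows of $G_k^\beta$. A linear code $\mathcal{C}\subseteq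 R^n$ has type $(n;t_1,\dots,t_s)$ if $\mathcal{C}\cong\bigoplus_{i=1}^s(R/\langle\gamma^{s-i+1}\rangle)^{t_i}$ as $R$-modules (the $t_i$ are unique); type $(n;k,0,\dots,0)$ means free of rank $k$. *)

theory Defs
  imports Main
begin

text \<open>Finite commutative chain ring R (a finite comm_ring_1 type) with maximal ideal
  generated by gam, nilpotency index s, and an ordered list es = [e_0,...,e_(q-1)]
  of coset representatives of R / gam R (so q = length es).\<close>

definition chain_ring_setup :: "'a::{comm_ring_1,finite} \<Rightarrow> nat \<Rightarrow> 'a list \<Rightarrow> bool" where
  "chain_ring_setup gam s es \<longleftrightarrow>
     \<comment> \<open>ideals form a chain (all ideals of a finite ring are f.g.; chain of principal ideals)\<close>
     (\<forall>a b::'a. a dvd b \<or> b dvd a) \<and>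
     \<comment> \<open>the maximal ideal (= set of non-units) is generated by gam\<close>
     (\<forall>x::'a. (\<not> x dvd 1) \<longleftrightarrow> gam dvd x) \<and>
     \<comment> \<open>nilpotency index s\<close>
     1 \<le> s \<and> gam ^ s = 0 \<and> gam ^ (s - 1) \<noteq> 0 \<and>
     \<comment> \<open>es is a complete, irredundant list of coset representatives, e_0 = 0, e_1 = 1\<close>
     2 \<le> length es \<and> es ! 0 = 0 \<and> es ! 1 = 1 \<and>
     (\<forall>i j. i < length es \<longrightarrow> j < length es \<longrightarrow> i \<noteq> j \<longrightarrow> \<not> gam dvd (es ! i - es ! j)) \<and>
     (\<forall>x::'a. \<exists>i < length es. gam dvd (x - es ! i))"

text \<open>Digit (index in es) of r at position i in the gam-adic expansion r = sum r_i gam^i.\<close>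
definition digits :: "'a::comm_ring_1 list \<Rightarrow> 'a \<Rightarrow> nat \<Rightarrow> 'a \<Rightarrow> nat \<Rightarrow> nat" where
  "digits es gam s r = (THE d. (\<forall>i<s. d i < length es) \<and> (\<forall>i\<ge>s. d i = 0) \<and>
        r = (\<Sum>i<s. es ! (d i) * gam ^ i))"

definition chain_less :: "'a::comm_ring_1 list \<Rightarrow> 'a \<Rightarrow> nat \<Rightarrow> 'a \<Rightarrow> 'a \<Rightarrow> bool" where
  "chain_less es gam s x y \<longleftrightarrow>
     (\<exists>i<s. digits es gam s x i < digits es gam s y i \<and>
        (\<forall>j. i < j \<and> j < s \<longrightarrow> digits es gam s x j = digits es gam s y j))"

definition rho :: "'a::{comm_ring_1,finite} list \<Rightarrow> 'a \<Rightarrow> nat \<Rightarrow> nat \<Rightarrow> 'a" where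
  "rho es gam s j = (THE r. card {x. chain_less es gam s x r} = j)"

definition rho_list :: "'a::{comm_ring_1,finite} list \<Rightarrow> 'a \<Rightarrow> nat \<Rightarrow> 'a list" where
  "rho_list es gam s = map (rho es gam s) [0..<card (UNIV :: 'a set)]"

definition ideal_elt :: "'a::{comm_ring_1,finite} list \<Rightarrow> 'a \<Rightarrow> nat \<Rightarrow> nat \<Rightarrow> 'a" where
  "ideal_elt es gam s j = (THE x. gam dvd x \<and> card {y. gam dvd y \<and> chain_less es gam s y x} = j)"

definition ideal_list :: "'a::{comm_ring_1,finite} list \<Rightarrow> 'a \<Rightarrow> nat \<Rightarrow> 'a list" where
  "ideal_list es gam s = map (ideal_elt es gam s) [0..<card {x::'a. gam dvd x}]"

text \<open>Matrices are lists of rows. stack c M: block with first row the constant vector c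
  (of length = number of columns of M) and M below. hcat: horizontal concatenation of blocks.\<close>
definition stack :: "'a \<Rightarrow> 'a list list \<Rightarrow> 'a list list" where
  "stack c M = replicate (length (hd M)) c # M"

definition hcat :: "'a list list list \<Rightarrow> 'a list list" where
  "hcat Bs = map (\<lambda>i. concat (map (\<lambda>B. B ! i) Bs)) [0..<length (hd Bs)]"

fun galpha :: "'a list \<Rightarrow> nat \<Rightarrow> 'a list list" where
  "galpha rs 0 = []"
| "galpha rs (Suc 0) = [rs]"
| "galpha rs (Suc (Suc k)) = hcat (map (\<lambda>r. stack r (galpha rs (Suc k))) rs)"

fun gbeta :: "'a::one list \<Rightarrow> 'a list \<Rightarrow> nat \<Rightarrow> 'a list list" where
  "gbeta rs gs 0 = []"
| "gbeta rs gs (Suc 0) = [[1]]"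
| "gbeta rs gs (Suc (Suc k)) =
     hcat (stack 1 (galpha rs (Suc k)) # map (\<lambda>g. stack g (gbeta rs gs (Suc k))) gs)"

definition G_alpha :: "'a::{comm_ring_1,finite} list \<Rightarrow> 'a \<Rightarrow> nat \<Rightarrow> nat \<Rightarrow> 'a list list" where
  "G_alpha es gam s k = galpha (rho_list es gam s) k"

definition G_beta :: "'a::{comm_ring_1,finite} list \<Rightarrow> 'a \<Rightarrow> nat \<Rightarrow> nat \<Rightarrow> 'a list list" where
  "G_beta es gam s k = gbeta (rho_list es gam s) (ideal_list es gam s) k"

text \<open>Vectors of R^n are functions nat => 'a vanishing at positions >= n.
  R-submodule of R^n generated by the rows of M (n = number of columns).\<close>
definition row_span :: "'a::comm_ring_1 list list \<Rightarrow> nat \<Rightarrow> (nat \<Rightarrow> 'a) set" where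
  "row_span M n = {v. \<exists>c::nat \<Rightarrow> 'a. \<forall>j. v j =
       (if j < n then (\<Sum>i<length M. c i * (M ! i ! j)) else 0)}"

definition S_beta :: "'a::{comm_ring_1,finite} list \<Rightarrow> 'a \<Rightarrow> nat \<Rightarrow> nat \<Rightarrow> (nat \<Rightarrow> 'a) set" where
  "S_beta es gam s k = row_span (G_beta es gam s k) (length (hd (G_beta es gam s k)))"

text \<open>Code type (n; t_1,...,t_s): t is the list [t_1,...,t_s]. C is isomorphic to
  the direct sum of (R/gam^(s-i+1))^(t_i): expressed as an R-linear surjection from
  the free module with basis {(i,l). i<s, l<t!i} onto C whose kernel is exactly
  {x. gam^(s-i) divides x(i,l)} (0-based i, so t!i = t_(i+1)).\<close>
definition code_type :: "'a::comm_ring_1 \<Rightarrow> nat \<Rightarrow> (nat \<Rightarrow> 'a) set \<Rightarrow> nat \<Rightarrow> nat list \<Rightarrow> bool" where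
  "code_type gam s C n t \<longleftrightarrow> length t = s \<and> C \<subseteq> {v. \<forall>j\<ge>n. v j = 0} \<and>
     (\<exists>\<phi> :: (nat \<times> nat \<Rightarrow> 'a) \<Rightarrow> (nat \<Rightarrow> 'a).
        let D = {x. \<forall>i l. \<not> (i < s \<and> l < t ! i) \<longrightarrow> x (i, l) = 0} in
        (\<forall>x\<in>D. \<forall>y\<in>D. \<forall>a. \<phi> (\<lambda>p. a * x p + y p) = (\<lambda>j. a * \<phi> x j + \<phi> y j)) \<and>
        \<phi> ` D = C \<and>
        (\<forall>x\<in>D. \<phi> x = (\<lambda>_. 0) \<longleftrightarrow> (\<forall>i<s. \<forall>l<t ! i. gam ^ (s - i) dvd x (i, l))))"

end

theory Submission imports Defs begin

fun evl :: "'a::comm_ring_1 list \<Rightarrow> 'a \<Rightarrow> nat list \<Rightarrow> 'a" where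
  "evl es g [] = 0"
| "evl es g (a # xs) = es ! a + g * evl es g xs"

lemma evl_sum: "evl es g xs = (\<Sum>i<length xs. es ! (xs ! i) * g ^ i)"
  by (induction xs) (simp_all del: sum.lessThan_Suc add: sum.lessThan_Suc_shift sum_distrib_left algebra_simps)

definition Ls :: "'b list \<Rightarrow> nat \<Rightarrow> nat list set" where
  "Ls es m = {xs. set xs \<subseteq> {..<length es} \<and> length xs = m}"

lemma card_Ls: "card (Ls es m) = length es ^ m"
  unfolding Ls_def using card_lists_length_eq[of "{..<length es}" m] by simp

lemma finite_Ls: "finite (Ls es m)"
  unfolding Ls_def using finite_lists_length_eq[of "{..<length es}" m] by simp

context
  fixes gam :: "'a::{comm_ring_1,finite}" and s :: nat and es :: "'a list"
  assumes cs: "chain_ring_setup gam s es"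
begin

lemma unit_iff: "(\<not> x dvd 1) \<longleftrightarrow> gam dvd x" using cs unfolding chain_ring_setup_def by auto
lemma s1: "1 \<le> s" using cs unfolding chain_ring_setup_def by auto
lemma gs0: "gam ^ s = 0" using cs unfolding chain_ring_setup_def by auto
lemma gs1: "gam ^ (s - 1) \<noteq> 0" using cs unfolding chain_ring_setup_def by auto
lemma q2: "2 \<le> length es" using cs unfolding chain_ring_setup_def by auto
lemma e0: "es ! 0 = 0" using cs unfolding chain_ring_setup_def by auto
lemma e1: "es ! 1 = 1" using cs unfolding chain_ring_setup_def by auto
lemma irr: "i < length es \<Longrightarrow> j < length es \<Longrightarrow> i \<noteq> j \<Longrightarrow> \<not> gam dvd (es ! i - es ! j)"
  using cs unfolding chain_ring_setup_def by auto
lemma cov: "\<exists>i < length es. gam dvd (x - es ! i)"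
  using cs unfolding chain_ring_setup_def by auto

lemma e1': "es ! Suc 0 = 1" using e1 by simp

lemma not_dvd1: "\<not> gam dvd 1" using unit_iff[of 1] by simp

lemma pow_ne0: "p < s \<Longrightarrow> gam ^ p \<noteq> 0"
proof
  assume "p < s" "gam ^ p = 0"
  then have "s - 1 = p + (s - 1 - p)" by simp
  then have "gam ^ (s - 1) = gam ^ p * gam ^ (s - 1 - p)"
    by (metis power_add)
  with \<open>gam ^ p = 0\<close> gs1 show False by simp
qed

lemma exist: "\<exists>xs \<in> Ls es m. gam ^ m dvd (x - evl es gam xs)"
proof (induction m arbitrary: x)
  case 0
  show ?case by (rule bexI[of _ "[]"]) (auto simp: Ls_def)
next
  case (Suc m)
  obtain a where a: "a < length es" "gam dvd (x - es ! a)" using cov by blast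
  then obtain y where y: "x - es ! a = gam * y" by (auto elim: dvdE)
  obtain ys where ys: "ys \<in> Ls es m" "gam ^ m dvd (y - evl es gam ys)" using Suc by blast
  then obtain z where z: "y - evl es gam ys = gam ^ m * z" by (auto elim: dvdE)
  have "x - evl es gam (a # ys) = gam * (y - evl es gam ys)"
    using y by (simp add: algebra_simps)
  also have "\<dots> = gam ^ Suc m * z" using z by simp
  finally have "gam ^ Suc m dvd (x - evl es gam (a # ys))" by simp
  moreover have "a # ys \<in> Ls es (Suc m)" using ys a by (auto simp: Ls_def)
  ultimately show ?case by blast
qed

lemma uniq: "xs \<in> Ls es m \<Longrightarrow> ys \<in> Ls es m \<Longrightarrow> p + m \<le> s \<Longrightarrow>
   gam ^ p * evl es gam xs = gam ^ p * evl es gam ys \<Longrightarrow> xs = ys"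
proof (induction m arbitrary: xs ys p)
  case 0
  then show ?case by (simp add: Ls_def)
next
  case (Suc m)
  obtain a xs' where xs: "xs = a # xs'" using Suc.prems(1) by (cases xs) (auto simp: Ls_def)
  obtain b ys' where ys: "ys = b # ys'" using Suc.prems(2) by (cases ys) (auto simp: Ls_def)
  have a: "a < length es" "xs' \<in> Ls es m" using Suc.prems(1) xs by (auto simp: Ls_def)
  have b: "b < length es" "ys' \<in> Ls es m" using Suc.prems(2) ys by (auto simp: Ls_def)
  define X where "X = evl es gam xs'"
  define Y where "Y = evl es gam ys'"
  have eq: "gam ^ p * (es ! a - es ! b) = gam ^ p * gam * (Y - X)"
    using Suc.prems(4) unfolding xs ys X_def Y_def by (simp add: algebra_simps)
  have ab: "a = b"
  proof (rule ccontr)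
    assume "a \<noteq> b"
    then have "\<not> gam dvd (es ! a - es ! b)" using irr a b by blast
    then have "(es ! a - es ! b) dvd 1" using unit_iff by blast
    then obtain v where v: "1 = (es ! a - es ! b) * v" by (auto elim: dvdE)
    have "gam ^ p = gam ^ p * (es ! a - es ! b) * v" using v by (metis mult.assoc mult_1_right)
    also have "\<dots> = (gam ^ p * gam * (Y - X)) * v" using eq by simp
    also have "\<dots> = gam ^ p * (gam * ((Y - X) * v))" by (simp add: algebra_simps)
    finally have h: "gam ^ p * (1 - gam * ((Y - X) * v)) = 0" by (simp add: algebra_simps)
    have "\<not> gam dvd (1 - gam * ((Y - X) * v))"
    proof
      assume "gam dvd (1 - gam * ((Y - X) * v))"
      from dvd_add[OF this dvd_triv_left[of gam "(Y - X) * v"]]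
      show False using not_dvd1 by simp
    qed
    then have "(1 - gam * ((Y - X) * v)) dvd 1" using unit_iff by blast
    then obtain e where e: "1 = (1 - gam * ((Y - X) * v)) * e" by (auto elim: dvdE)
    have "gam ^ p = gam ^ p * (1 - gam * ((Y - X) * v)) * e" using e by (metis mult.assoc mult_1_right)
    also have "\<dots> = 0" using h by simp
    finally have "gam ^ p = 0" .
    moreover have "p < s" using Suc.prems(3) by simp
    ultimately show False using pow_ne0 by blast
  qed
  then have "gam ^ Suc p * X = gam ^ Suc p * Y"
    using Suc.prems(4) unfolding xs ys X_def Y_def by (simp add: algebra_simps)
  then have "xs' = ys'" using Suc.IH[OF a(2) b(2), of "Suc p"] Suc.prems(3)
    unfolding X_def Y_def by simp
  then show ?case using ab xs ys by simp
qed

lemma rep: "\<exists>xs \<in> Ls es s. evl es gam xs = x"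
proof -
  obtain xs where "xs \<in> Ls es s" "gam ^ s dvd (x - evl es gam xs)" using exist by blast
  then show ?thesis using gs0 by auto
qed

lemma evl_inj: "xs \<in> Ls es s \<Longrightarrow> ys \<in> Ls es s \<Longrightarrow> evl es gam xs = evl es gam ys \<Longrightarrow> xs = ys"
  using uniq[of xs s ys 0] by simp

lemma digits_eq: assumes xs: "xs \<in> Ls es s"
  shows "digits es gam s (evl es gam xs) = (\<lambda>i. if i < s then xs ! i else 0)"
  unfolding digits_def
proof (rule the_equality)
  have len: "length xs = s" using xs by (simp add: Ls_def)
  show "(\<forall>i<s. (if i < s then xs ! i else 0) < length es) \<and> (\<forall>i\<ge>s. (if i < s then xs ! i else 0) = 0) \<and>
    evl es gam xs = (\<Sum>i<s. es ! (if i < s then xs ! i else 0) * gam ^ i)"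
    using xs len by (auto simp: Ls_def evl_sum subset_iff)
next
  fix d assume d: "(\<forall>i<s. d i < length es) \<and> (\<forall>i\<ge>s. d i = 0) \<and> evl es gam xs = (\<Sum>i<s. es ! d i * gam ^ i)"
  define ys where "ys = map d [0..<s]"
  have ys: "ys \<in> Ls es s" using d by (auto simp: ys_def Ls_def)
  have "evl es gam ys = (\<Sum>i<s. es ! d i * gam ^ i)" by (simp add: evl_sum ys_def)
  then have "ys = xs" using evl_inj[OF ys xs] d by simp
  then show "d = (\<lambda>i. if i < s then xs ! i else 0)"
    using d by (auto simp: ys_def fun_eq_iff)
qed

abbreviation D where "D x \<equiv> digits es gam s x"

lemma D_large: "i \<ge> s \<Longrightarrow> D x i = 0"
  using rep[of x] digits_eq by auto

lemma D_inj: assumes "D x = D y" shows "x = y"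
proof -
  obtain xs where xs: "xs \<in> Ls es s" "evl es gam xs = x" using rep by blast
  obtain ys where ys: "ys \<in> Ls es s" "evl es gam ys = y" using rep by blast
  have "(\<lambda>i. if i < s then xs ! i else 0) = (\<lambda>i. if i < s then ys ! i else (0::nat))"
    using assms xs ys digits_eq by metis
  then have "\<forall>i<s. xs ! i = ys ! i" by (metis (mono_tags))
  then have "xs = ys" using xs(1) ys(1) by (auto simp: Ls_def intro: nth_equalityI)
  then show ?thesis using xs ys by simp
qed

lemma evl_rep0: "evl es gam (replicate n 0) = 0"
  by (induction n) (simp_all add: e0)

lemma D0: "D 0 = (\<lambda>i. 0)"
proof -
  have "replicate s 0 \<in> Ls es s" using q2 by (auto simp: Ls_def)
  from digits_eq[OF this] show ?thesis by (auto simp: evl_rep0 fun_eq_iff)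
qed

lemma D1: "D 1 = (\<lambda>i. if i = 0 then 1 else 0)"
proof -
  have m: "1 # replicate (s - 1) 0 \<in> Ls es s" using q2 s1 by (auto simp: Ls_def)
  have "evl es gam (1 # replicate (s - 1) 0) = 1" by (simp add: evl_rep0 e1')
  with digits_eq[OF m] s1 show ?thesis by (auto simp: fun_eq_iff nth_Cons split: nat.splits)
qed

lemma one_ne_zero: "(1::'a) \<noteq> 0" using not_dvd1 by auto

lemma nz_digit: "x \<noteq> 0 \<Longrightarrow> \<exists>i<s. D x i \<noteq> 0"
proof (rule ccontr)
  assume "x \<noteq> 0" "\<not> (\<exists>i<s. D x i \<noteq> 0)"
  then have "D x = D 0" using D0 D_large by (auto simp: fun_eq_iff not_less)
  then show False using D_inj \<open>x \<noteq> 0\<close> by blast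
qed

lemma max_digit: assumes "x \<noteq> 0"
  obtains m where "m < s" "D x m \<noteq> 0" "\<forall>j. m < j \<longrightarrow> D x j = 0"
proof -
  define I where "I = {i. i < s \<and> D x i \<noteq> 0}"
  have fin: "finite I" by (simp add: I_def)
  have ne: "I \<noteq> {}" using nz_digit[OF assms] by (auto simp: I_def)
  define m where "m = Max I"
  have "m \<in> I" using fin ne by (simp add: m_def)
  moreover have "\<forall>j. m < j \<longrightarrow> D x j = 0"
  proof (intro allI impI)
    fix j assume "m < j"
    show "D x j = 0"
    proof (cases "j < s")
      case True
      show ?thesis
      proof (rule ccontr)
        assume "D x j \<noteq> 0"
        then have "j \<in> I" using True by (simp add: I_def)
        then have "j \<le> m" using fin by (simp add: m_def)
        with \<open>m < j\<close> show False by simp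
      qed
    next
      case False then show ?thesis using D_large by simp
    qed
  qed
  ultimately show ?thesis using that by (auto simp: I_def)
qed

lemma zero_less: "x \<noteq> 0 \<Longrightarrow> chain_less es gam s 0 x"
proof -
  assume "x \<noteq> 0"
  then obtain m where m: "m < s" "D x m \<noteq> 0" "\<forall>j. m < j \<longrightarrow> D x j = 0" by (rule max_digit)
  show ?thesis unfolding chain_less_def D0
    by (rule exI[of _ m]) (use m in auto)
qed

lemma not_less_zero: "\<not> chain_less es gam s x 0"
  unfolding chain_less_def D0 by simp

lemma less_one: "chain_less es gam s x 1 \<Longrightarrow> x = 0"
proof -
  assume "chain_less es gam s x 1"
  then obtain i where i: "i < s" "D x i < D 1 i" "\<forall>j. i < j \<and> j < s \<longrightarrow> D x j = D 1 j"
    unfolding chain_less_def by blast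
  have i0: "i = 0" using i(2) D1 by (auto split: if_splits)
  have "D x = D 0"
  proof
    fix j show "D x j = D 0 j"
      using i i0 D1 D0 D_large[of j x] by (cases "j = 0"; cases "j < s") auto
  qed
  then show ?thesis using D_inj by blast
qed

lemma one_less: "x \<noteq> 0 \<Longrightarrow> x \<noteq> 1 \<Longrightarrow> chain_less es gam s 1 x"
proof -
  assume x0: "x \<noteq> 0" and x1: "x \<noteq> 1"
  obtain m where m: "m < s" "D x m \<noteq> 0" "\<forall>j. m < j \<longrightarrow> D x j = 0" using max_digit[OF x0] by metis
  show ?thesis
  proof (cases "m = 0")
    case False
    then show ?thesis unfolding chain_less_def D1
      by (intro exI[of _ m]) (use m in auto)
  next
    case True
    have "D x 0 \<noteq> 1"
    proof
      assume "D x 0 = 1"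
      then have "D x = D 1" using m True D1 by (auto simp: fun_eq_iff)
      then show False using D_inj x1 by blast
    qed
    then have "1 < D x 0" using m True by simp
    then show ?thesis unfolding chain_less_def D1
      by (intro exI[of _ 0]) (use m True s1 in auto)
  qed
qed

lemma card2: "2 \<le> card (UNIV :: 'a set)"
proof -
  have "card {0::'a, 1} = 2" using one_ne_zero by simp
  moreover have "card {0::'a, 1} \<le> card (UNIV :: 'a set)" by (rule card_mono) auto
  ultimately show ?thesis by simp
qed

lemma rho0: "rho es gam s 0 = 0"
  unfolding rho_def
proof (rule the_equality)
  show "card {x. chain_less es gam s x 0} = 0" using not_less_zero by simp
next
  fix r assume h: "card {x. chain_less es gam s x r} = 0"
  show "r = 0"
  proof (rule ccontr)
    assume "r \<noteq> 0"
    then have "0 \<in> {x. chain_less es gam s x r}" using zero_less by simp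
    then show False using h by (metis card_0_eq empty_iff finite)
  qed
qed

lemma rho1: "rho es gam s 1 = 1"
  unfolding rho_def
proof (rule the_equality)
  have "{x. chain_less es gam s x 1} = {0}" using less_one zero_less[OF one_ne_zero] by auto
  then show "card {x. chain_less es gam s x 1} = 1" by simp
next
  fix r assume h: "card {x. chain_less es gam s x r} = 1"
  have r0: "r \<noteq> 0" using h not_less_zero by auto
  show "r = 1"
  proof (rule ccontr)
    assume "r \<noteq> 1"
    then have "{0, 1} \<subseteq> {x. chain_less es gam s x r}" using zero_less one_less r0 by auto
    then have "card {0::'a, 1} \<le> card {x. chain_less es gam s x r}" by (intro card_mono) auto
    then show False using h one_ne_zero by simp
  qed
qed

lemma rho_list_01: "0 \<in> set (rho_list es gam s)" "1 \<in> set (rho_list es gam s)"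
proof -
  have "rho_list es gam s ! 0 = 0" "rho_list es gam s ! 1 = 1" "1 < length (rho_list es gam s)"
    using card2 rho0 rho1 by (simp_all add: rho_list_def)
  then show "0 \<in> set (rho_list es gam s)" "1 \<in> set (rho_list es gam s)"
    by (metis nth_mem less_trans zero_less_one)+
qed

lemma card_univ: "card (UNIV :: 'a set) = length es ^ s"
proof -
  have "x \<in> evl es gam ` Ls es s" for x
  proof -
    obtain xs where "xs \<in> Ls es s" "evl es gam xs = x" using rep by blast
    then show ?thesis by blast
  qed
  then have "evl es gam ` Ls es s = UNIV" by blast
  moreover have "inj_on (evl es gam) (Ls es s)" using evl_inj by (auto simp: inj_on_def)
  ultimately show ?thesis using card_image card_Ls by metis
qed

lemma card_ideal: "card {x::'a. gam dvd x} = length es ^ (s - 1)"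
proof -
  have "{x::'a. gam dvd x} = evl es gam ` ((\<lambda>ys. 0 # ys) ` Ls es (s - 1))"
  proof (intro equalityI subsetI)
    fix x :: 'a assume "x \<in> {x. gam dvd x}"
    then have gx: "gam dvd x" by simp
    obtain xs where xs: "xs \<in> Ls es s" "evl es gam xs = x" using rep by blast
    obtain a ys where a: "xs = a # ys" using xs(1) s1 by (cases xs) (auto simp: Ls_def)
    have al: "a < length es" "ys \<in> Ls es (s - 1)" using xs(1) a by (auto simp: Ls_def)
    have "gam dvd (es ! a + gam * evl es gam ys)" using gx xs(2) a by simp
    then have "gam dvd (es ! a - es ! 0)" using e0
      by (metis add_diff_cancel_right' dvd_diff dvd_triv_left diff_zero)
    moreover have "0 < length es" using q2 by linarith
    ultimately have "a = 0" using irr[of a 0] al by blast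
    then have "x = evl es gam (0 # ys)" "0 # ys \<in> (\<lambda>ys. 0 # ys) ` Ls es (s - 1)" using xs a al by auto
    then show "x \<in> evl es gam ` ((\<lambda>ys. 0 # ys) ` Ls es (s - 1))" by blast
  next
    fix x assume "x \<in> evl es gam ` ((\<lambda>ys. 0 # ys) ` Ls es (s - 1))"
    then show "x \<in> {x. gam dvd x}" by (auto simp: e0)
  qed
  moreover have "(\<lambda>ys. 0 # ys) ` Ls es (s - 1) \<subseteq> Ls es s" using q2 s1 by (auto simp: Ls_def)
  then have "inj_on (evl es gam) ((\<lambda>ys. 0 # ys) ` Ls es (s - 1))"
    by (meson evl_inj inj_onI subsetD)
  moreover have "card ((\<lambda>ys. (0::nat) # ys) ` Ls es (s - 1)) = length es ^ (s - 1)"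
    using card_Ls by (simp add: card_image)
  ultimately show ?thesis by (simp add: card_image)
qed

end

definition wfm :: "nat \<Rightarrow> nat \<Rightarrow> 'a list list \<Rightarrow> bool" where
  "wfm m w M \<longleftrightarrow> length M = m \<and> (\<forall>r\<in>set M. length r = w)"

definition hascol :: "'a list list \<Rightarrow> (nat \<Rightarrow> 'a) \<Rightarrow> bool" where
  "hascol M v \<longleftrightarrow> (\<exists>j < length (hd M). \<forall>i < length M. M ! i ! j = v i)"

lemma hd_width: "wfm m w M \<Longrightarrow> 0 < m \<Longrightarrow> length (hd M) = w"
  unfolding wfm_def by (metis hd_in_set length_greater_0_conv)

lemma wfm_stack: "wfm m w M \<Longrightarrow> 0 < m \<Longrightarrow> wfm (Suc m) w (stack c M)"
  using hd_width[of m w M] unfolding wfm_def stack_def by auto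

lemma hd_stack_len: "length (hd (stack c M)) = length (hd M)"
  by (simp add: stack_def)

lemma hcat_nth: "i < length (hd Bs) \<Longrightarrow> hcat Bs ! i = concat (map (\<lambda>B. B ! i) Bs)"
  by (simp add: hcat_def)

lemma wfm_hcat:
  assumes "Bs \<noteq> []" "0 < m" "\<forall>B\<in>set Bs. wfm m (length (hd B)) B"
  shows "wfm m (\<Sum>B\<leftarrow>Bs. length (hd B)) (hcat Bs)"
proof -
  have lh: "length (hd Bs) = m" using assms by (simp add: wfm_def)
  have "length (hcat Bs) = m" using lh by (simp add: hcat_def)
  moreover have "length r = (\<Sum>B\<leftarrow>Bs. length (hd B))" if r: "r \<in> set (hcat Bs)" for r
  proof -
    obtain i where i: "i < m" "r = concat (map (\<lambda>B. B ! i) Bs)"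
      using r lh by (auto simp: hcat_def)
    have "length r = (\<Sum>B\<leftarrow>Bs. length (B ! i))" using i by (simp add: length_concat comp_def)
    also have "\<dots> = (\<Sum>B\<leftarrow>Bs. length (hd B))"
    proof (rule arg_cong[where f = sum_list], rule map_cong[OF refl])
      fix B assume "B \<in> set Bs"
      then have "wfm m (length (hd B)) B" using assms by blast
      then show "length (B ! i) = length (hd B)" using i unfolding wfm_def by auto
    qed
    finally show ?thesis .
  qed
  ultimately show ?thesis unfolding wfm_def by blast
qed

lemma hascol_stack:
  assumes "M \<noteq> []" "hascol M v"
  shows "hascol (stack c M) (\<lambda>i. if i = 0 then c else v (i - 1))"
proof -
  obtain j where j: "j < length (hd M)" "\<forall>i < length M. M ! i ! j = v i"
    using assms unfolding hascol_def by blast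
  have "\<forall>i < length (stack c M). stack c M ! i ! j = (if i = 0 then c else v (i - 1))"
  proof (intro allI impI)
    fix i assume "i < length (stack c M)"
    then show "stack c M ! i ! j = (if i = 0 then c else v (i - 1))"
      using j by (cases i) (auto simp: stack_def)
  qed
  then show ?thesis unfolding hascol_def using j by (auto simp: stack_def)
qed

lemma hascol_hcat:
  assumes "0 < m" "\<forall>B\<in>set Bs. wfm m (length (hd B)) B" "B \<in> set Bs" "hascol B v"
  shows "hascol (hcat Bs) v"
proof -
  obtain pre post where Bs: "Bs = pre @ B # post" using assms(3) by (meson split_list)
  obtain j where j: "j < length (hd B)" "\<forall>i < length B. B ! i ! j = v i"
    using assms(4) unfolding hascol_def by blast
  have "Bs \<noteq> []" using Bs by simp
  then have "hd Bs \<in> set Bs" by (rule hd_in_set)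
  then have lh: "length (hd Bs) = m" using assms(2) by (simp add: wfm_def)
  have wB: "wfm m (length (hd B)) B" using assms by blast
  define P where "P = (\<Sum>B\<leftarrow>pre. length (hd B))"
  have lenpre: "length (concat (map (\<lambda>B. B ! i) pre)) = P" if "i < m" for i
  proof -
    have "length (concat (map (\<lambda>B. B ! i) pre)) = (\<Sum>B\<leftarrow>pre. length (B ! i))"
      by (simp add: length_concat comp_def)
    also have "\<dots> = P" unfolding P_def
    proof (rule arg_cong[where f = sum_list], rule map_cong[OF refl])
      fix B' assume "B' \<in> set pre"
      then have "wfm m (length (hd B')) B'" using assms Bs by auto
      then show "length (B' ! i) = length (hd B')" using that unfolding wfm_def by auto
    qed
    finally show ?thesis .
  qed
  have row: "hcat Bs ! i = concat (map (\<lambda>B. B ! i) pre) @ B ! i @ concat (map (\<lambda>B. B ! i) post)"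
    if "i < m" for i
    using that lh by (simp add: hcat_nth Bs)
  have lB: "length (B ! i) = length (hd B)" if "i < m" for i
    using wB that unfolding wfm_def by auto
  have "\<forall>i < length (hcat Bs). hcat Bs ! i ! (P + j) = v i"
  proof (intro allI impI)
    fix i assume "i < length (hcat Bs)"
    then have i: "i < m" using lh by (simp add: hcat_def)
    have "hcat Bs ! i ! (P + j) = (B ! i @ concat (map (\<lambda>B. B ! i) post)) ! j"
      using row[OF i] lenpre[OF i] by (simp add: nth_append)
    also have "\<dots> = B ! i ! j" using j lB[OF i] by (simp add: nth_append)
    also have "\<dots> = v i" using j i wB by (simp add: wfm_def)
    finally show "hcat Bs ! i ! (P + j) = v i" .
  qed
  moreover have "P + j < length (hd (hcat Bs))"
  proof -
    have "hd (hcat Bs) = hcat Bs ! 0" using lh assms(1) by (simp add: hcat_def hd_conv_nth)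
    then have "hd (hcat Bs) = concat (map (\<lambda>B. B ! 0) pre) @ B ! 0 @ concat (map (\<lambda>B. B ! 0) post)"
      using row[OF assms(1)] by simp
    then show ?thesis using lenpre[OF assms(1)] lB[OF assms(1)] j by simp
  qed
  ultimately show ?thesis unfolding hascol_def by blast
qed

lemma galpha_wf: "rs \<noteq> [] \<Longrightarrow> wfm (Suc k) (length rs ^ Suc k) (galpha rs (Suc k))"
proof (induction k)
  case 0 then show ?case by (simp add: wfm_def)
next
  case (Suc k)
  let ?G = "galpha rs (Suc k)"
  let ?Bs = "map (\<lambda>r. stack r ?G) rs"
  have all: "\<forall>B\<in>set ?Bs. wfm (Suc (Suc k)) (length (hd B)) B"
  proof
    fix B assume "B \<in> set ?Bs"
    then obtain r where "B = stack r ?G" by auto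
    moreover have "wfm (Suc (Suc k)) (length rs ^ Suc k) (stack r ?G)"
      using wfm_stack[OF Suc.IH[OF Suc.prems]] by simp
    moreover have "length (hd (stack r ?G)) = length rs ^ Suc k"
      using hd_width[OF Suc.IH[OF Suc.prems]] by (simp add: hd_stack_len)
    ultimately show "wfm (Suc (Suc k)) (length (hd B)) B" by simp
  qed
  have "(\<Sum>B\<leftarrow>?Bs. length (hd B)) = length rs ^ Suc (Suc k)"
    using hd_width[OF Suc.IH[OF Suc.prems]] by (simp add: hd_stack_len comp_def sum_list_triv)
  with wfm_hcat[OF _ _ all] Suc.prems show ?case by simp
qed

lemma galpha_col: "(\<forall>i<Suc k. v i \<in> set rs) \<Longrightarrow> hascol (galpha rs (Suc k)) v"
proof (induction k arbitrary: v)
  case 0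
  then obtain j where "j < length rs" "rs ! j = v 0" by (meson in_set_conv_nth zero_less_Suc)
  then show ?case by (auto simp: hascol_def)
next
  case (Suc k)
  have rs: "rs \<noteq> []" using Suc.prems by auto
  let ?G = "galpha rs (Suc k)"
  have "hascol ?G (\<lambda>i. v (Suc i))" using Suc.IH Suc.prems by simp
  then have "hascol (stack (v 0) ?G) (\<lambda>i. if i = 0 then v 0 else v (Suc (i - 1)))"
    using galpha_wf[OF rs, of k] by (intro hascol_stack) (auto simp: wfm_def)
  moreover have "(\<lambda>i. if i = 0 then v 0 else v (Suc (i - 1))) = v" by (auto simp: fun_eq_iff)
  ultimately have hc: "hascol (stack (v 0) ?G) v" by simp
  have all: "\<forall>B\<in>set (map (\<lambda>r. stack r ?G) rs). wfm (Suc (Suc k)) (length (hd B)) B"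
    using wfm_stack[OF galpha_wf[OF rs, of k]] hd_width[OF galpha_wf[OF rs, of k]]
    by (auto simp: hd_stack_len)
  have "stack (v 0) ?G \<in> set (map (\<lambda>r. stack r ?G) rs)" using Suc.prems by auto
  from hascol_hcat[OF _ all this hc] show ?case by simp
qed

fun nb :: "nat \<Rightarrow> nat \<Rightarrow> nat \<Rightarrow> nat" where
  "nb a b 0 = 0"
| "nb a b (Suc 0) = 1"
| "nb a b (Suc (Suc k)) = a ^ Suc k + b * nb a b (Suc k)"

lemma gbeta_wf: "rs \<noteq> [] \<Longrightarrow> wfm (Suc k) (nb (length rs) (length gs) (Suc k)) (gbeta rs gs (Suc k))"
proof (induction k)
  case 0 then show ?case by (simp add: wfm_def)
next
  case (Suc k)
  let ?A = "galpha rs (Suc k)"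
  let ?G = "gbeta rs gs (Suc k)"
  let ?Bs = "stack 1 ?A # map (\<lambda>g. stack g ?G) gs"
  have wA: "wfm (Suc (Suc k)) (length rs ^ Suc k) (stack 1 ?A)" "length (hd (stack 1 ?A)) = length rs ^ Suc k"
    using wfm_stack[OF galpha_wf[OF Suc.prems]] hd_width[OF galpha_wf[OF Suc.prems]]
    by (auto simp: hd_stack_len)
  have wG: "wfm (Suc (Suc k)) (nb (length rs) (length gs) (Suc k)) (stack g ?G)"
     "length (hd (stack g ?G)) = nb (length rs) (length gs) (Suc k)" for g
    using wfm_stack[OF Suc.IH[OF Suc.prems]] hd_width[OF Suc.IH[OF Suc.prems]]
    by (auto simp: hd_stack_len)
  have all: "\<forall>B\<in>set ?Bs. wfm (Suc (Suc k)) (length (hd B)) B"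
    using wA wG by auto
  have "(\<Sum>B\<leftarrow>?Bs. length (hd B)) = nb (length rs) (length gs) (Suc (Suc k))"
    using wA wG by (simp add: comp_def sum_list_triv)
  with wfm_hcat[OF _ _ all] show ?case by simp
qed

lemma colsum:
  assumes "hascol M v" "wfm m w M" "0 < m"
  obtains j where "j < w" "\<And>c. (\<Sum>i<m. c i * M ! i ! j) = (\<Sum>i<m. c i * v i)"
proof -
  obtain j where j: "j < length (hd M)" "\<forall>i < length M. M ! i ! j = v i"
    using assms(1) unfolding hascol_def by blast
  have "j < w" using j hd_width[OF assms(2,3)] by simp
  moreover have "(\<Sum>i<m. c i * M ! i ! j) = (\<Sum>i<m. c i * v i)" for c
    using j assms(2) by (intro sum.cong) (auto simp: wfm_def)
  ultimately show ?thesis using that by blast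
qed

lemma indep:
  assumes z: "(0::'a::comm_ring_1) \<in> set rs" and o: "1 \<in> set rs"
    and h: "\<forall>j < nb (length rs) (length gs) (Suc k). (\<Sum>i<Suc k. c i * gbeta rs gs (Suc k) ! i ! j) = 0"
  shows "\<forall>i<Suc k. c i = 0"
proof (cases k)
  case 0
  then show ?thesis using h by simp
next
  case (Suc k')
  have rs: "rs \<noteq> []" using z by auto
  let ?M = "gbeta rs gs (Suc (Suc k'))"
  let ?A = "galpha rs (Suc k')"
  let ?Bs = "stack 1 ?A # map (\<lambda>g. stack g (gbeta rs gs (Suc k'))) gs"
  have wM: "wfm (Suc (Suc k')) (nb (length rs) (length gs) (Suc (Suc k'))) ?M"
    using gbeta_wf[OF rs] by blast
  have all: "\<forall>B\<in>set ?Bs. wfm (Suc (Suc k')) (length (hd B)) B"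
    using wfm_stack[OF galpha_wf[OF rs]] hd_width[OF galpha_wf[OF rs]]
      wfm_stack[OF gbeta_wf[OF rs]] hd_width[OF gbeta_wf[OF rs]]
    by (auto simp: hd_stack_len)
  have key: "c 0 + (\<Sum>i<Suc k'. c (Suc i) * v i) = 0" if v: "\<forall>i<Suc k'. v i \<in> set rs" for v
  proof -
    have "hascol ?A v" using galpha_col v by blast
    then have "hascol (stack 1 ?A) (\<lambda>i. if i = 0 then 1 else v (i - 1))"
      using galpha_wf[OF rs, of k'] by (intro hascol_stack) (auto simp: wfm_def)
    then have "hascol ?M (\<lambda>i. if i = 0 then 1 else v (i - 1))"
      unfolding gbeta.simps by (intro hascol_hcat[OF _ all, of "stack 1 ?A"]) auto
    then obtain j where j: "j < nb (length rs) (length gs) (Suc (Suc k'))"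
      "\<And>c. (\<Sum>i<Suc (Suc k'). c i * ?M ! i ! j) = (\<Sum>i<Suc (Suc k'). c i * (if i = 0 then 1 else v (i - 1)))"
      using colsum[OF _ wM] by blast
    have "(\<Sum>i<Suc (Suc k'). c i * ?M ! i ! j) = 0"
      using h[unfolded Suc] j(1) by blast
    then have "0 = (\<Sum>i<Suc (Suc k'). c i * (if i = 0 then 1 else v (i - 1)))"
      unfolding j(2) by simp
    also have "\<dots> = c 0 + (\<Sum>i<Suc k'. c (Suc i) * v i)"
      by (subst sum.lessThan_Suc_shift) simp
    finally show ?thesis by simp
  qed
  have c0: "c 0 = 0" using key[of "\<lambda>_. 0"] z by simp
  have "c (Suc l) = 0" if l: "l < Suc k'" for l
  proof -
    have "c 0 + (\<Sum>i<Suc k'. c (Suc i) * (if i = l then 1 else 0)) = 0"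
      using key[of "\<lambda>i. if i = l then 1 else 0"] z o by simp
    then show ?thesis using c0 l by (simp add: if_distrib sum.delta cong: if_cong)
  qed
  then show ?thesis using c0 Suc by (metis less_Suc_eq_0_disj)
qed

lemma geo: "(Suc p) ^ k - 1 = p * (\<Sum>i<k. Suc p ^ i)"
proof -
  have "p * (\<Sum>i<k. Suc p ^ i) + 1 = Suc p ^ k"
    by (induction k) (simp_all add: algebra_simps)
  then show ?thesis by simp
qed

lemma nb_closed: "nb (q ^ Suc s') (q ^ s') (Suc k) = q ^ (s' * k) * (\<Sum>i<Suc k. q ^ i)"
proof (induction k)
  case 0 then show ?case by simp
next
  case (Suc k)
  have "nb (q ^ Suc s') (q ^ s') (Suc (Suc k)) = (q ^ Suc s') ^ Suc k + q ^ s' * nb (q ^ Suc s') (q ^ s') (Suc k)"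
    by (simp only: nb.simps)
  also have "\<dots> = q ^ (Suc s' * Suc k) + q ^ s' * (q ^ (s' * k) * (\<Sum>i<Suc k. q ^ i))"
    using Suc by (simp only: power_mult)
  also have "q ^ (Suc s' * Suc k) = q ^ (s' * Suc k) * q ^ Suc k"
  proof -
    have "Suc s' * Suc k = s' * Suc k + Suc k" by simp
    then show ?thesis by (metis power_add)
  qed
  also have "q ^ s' * (q ^ (s' * k) * (\<Sum>i<Suc k. q ^ i)) = q ^ (s' * Suc k) * (\<Sum>i<Suc k. q ^ i)"
    by (simp only: mult_Suc_right power_add mult.assoc)
  also have "q ^ (s' * Suc k) * q ^ Suc k + q ^ (s' * Suc k) * (\<Sum>i<Suc k. q ^ i) = q ^ (s' * Suc k) * (q ^ Suc k + (\<Sum>i<Suc k. q ^ i))"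
    by (simp only: distrib_left)
  also have "\<dots> = q ^ (s' * Suc k) * (\<Sum>i<Suc (Suc k). q ^ i)" by simp
  finally show ?case .
qed


theorem proposition3p2:
  fixes gam :: "'a::{comm_ring_1,finite}" and s k :: nat and es :: "'a list"
  assumes "chain_ring_setup gam s es"
    and "1 \<le> k"
  shows "length (hd (G_beta es gam s k))
           = length es ^ ((s - 1) * (k - 1)) * ((length es ^ k - 1) div (length es - 1))
         \<and> code_type gam s (S_beta es gam s k) (length (hd (G_beta es gam s k)))
             (k # replicate (s - 1) 0)"
proof -
  note cs = assms(1)
  let ?rs = "rho_list es gam s"
  let ?gs = "ideal_list es gam s"
  define q where "q = length es"
  obtain s' where s: "s = Suc s'" using s1[OF cs] by (cases s) auto
  obtain k' where k: "k = Suc k'" using assms(2) by (cases k) auto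
  obtain p where p: "q = Suc p" "0 < p" using q2[OF cs] unfolding q_def by (cases "length es") auto
  have lrs: "length ?rs = q ^ Suc s'" using card_univ[OF cs] s q_def by (simp add: rho_list_def)
  have lgs: "length ?gs = q ^ s'" using card_ideal[OF cs] s q_def by (simp add: ideal_list_def)
  have z: "0 \<in> set ?rs" and o: "1 \<in> set ?rs" using rho_list_01[OF cs] by auto
  have rs: "?rs \<noteq> []" using z by auto
  define M where "M = G_beta es gam s k"
  have M: "M = gbeta ?rs ?gs (Suc k')" by (simp add: M_def G_beta_def k)
  define n where "n = length (hd M)"
  have wM: "wfm (Suc k') (nb (q ^ Suc s') (q ^ s') (Suc k')) M"
    using gbeta_wf[OF rs, of k' ?gs] unfolding M lrs lgs .
  have n: "n = q ^ (s' * k') * (\<Sum>i<Suc k'. q ^ i)"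
    using hd_width[OF wM] nb_closed unfolding n_def by simp
  have part1: "n = q ^ ((s - 1) * (k - 1)) * ((q ^ k - 1) div (q - 1))"
  proof -
    have "(q ^ k - 1) div (q - 1) = (\<Sum>i<Suc k'. q ^ i)"
      using geo[of p k] p k by simp
    then show ?thesis using n s k by simp
  qed
  define t where "t = k # replicate (s - 1) (0::nat)"
  have lM: "length M = k" using wM k by (simp add: wfm_def)
  have SB: "S_beta es gam s k = row_span M n" unfolding S_beta_def M_def n_def by simp
  define \<phi> where "\<phi> = (\<lambda>x::nat \<times> nat \<Rightarrow> 'a. \<lambda>j. if j < n then (\<Sum>i<k. x (0, i) * M ! i ! j) else 0)"
  define DD where "DD = {x::nat \<times> nat \<Rightarrow> 'a. \<forall>i l. \<not> (i < s \<and> l < t ! i) \<longrightarrow> x (i, l) = 0}"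
  have lin: "\<forall>x\<in>DD. \<forall>y\<in>DD. \<forall>a. \<phi> (\<lambda>p. a * x p + y p) = (\<lambda>j. a * \<phi> x j + \<phi> y j)"
    unfolding \<phi>_def by (auto simp: fun_eq_iff sum.distrib sum_distrib_left algebra_simps)
  have img: "\<phi> ` DD = row_span M n"
  proof (intro equalityI subsetI)
    fix v assume "v \<in> \<phi> ` DD"
    then obtain x where "v = \<phi> x" by blast
    then show "v \<in> row_span M n" unfolding row_span_def \<phi>_def lM
      by (intro CollectI exI[of _ "\<lambda>i. x (0, i)"]) simp
  next
    fix v assume "v \<in> row_span M n"
    then obtain c where c: "\<forall>j. v j = (if j < n then (\<Sum>i<k. c i * M ! i ! j) else 0)"
      unfolding row_span_def lM by blast
    define x where "x = (\<lambda>(i::nat, l::nat). if i = 0 \<and> l < k then c l else (0::'a))"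
    have "x \<in> DD" unfolding DD_def x_def t_def using s by auto
    moreover have "\<phi> x = v" unfolding \<phi>_def x_def using c by (auto simp: fun_eq_iff)
    ultimately show "v \<in> \<phi> ` DD" by blast
  qed
  have ker: "\<forall>x\<in>DD. \<phi> x = (\<lambda>_. 0) \<longleftrightarrow> (\<forall>i<s. \<forall>l<t ! i. gam ^ (s - i) dvd x (i, l))"
  proof
    fix x assume "x \<in> DD"
    have rhs: "(\<forall>i<s. \<forall>l<t ! i. gam ^ (s - i) dvd x (i, l)) \<longleftrightarrow> (\<forall>l<k. x (0, l) = 0)"
    proof
      assume "\<forall>i<s. \<forall>l<t ! i. gam ^ (s - i) dvd x (i, l)"
      then have "\<forall>l<k. gam ^ s dvd x (0, l)" using s by (auto simp: t_def)
      then show "\<forall>l<k. x (0, l) = 0" using gs0[OF cs] by simp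
    next
      assume h: "\<forall>l<k. x (0, l) = 0"
      show "\<forall>i<s. \<forall>l<t ! i. gam ^ (s - i) dvd x (i, l)"
      proof (intro allI impI)
        fix i l assume "i < s" "l < t ! i"
        then have "i = 0" "l < k" by (auto simp: t_def nth_Cons split: nat.splits)
        then show "gam ^ (s - i) dvd x (i, l)" using h by simp
      qed
    qed
    have "\<phi> x = (\<lambda>_. 0) \<longleftrightarrow> (\<forall>l<k. x (0, l) = 0)"
    proof
      assume h: "\<phi> x = (\<lambda>_. 0)"
      have "\<forall>j < nb (length ?rs) (length ?gs) (Suc k'). (\<Sum>i<Suc k'. x (0, i) * gbeta ?rs ?gs (Suc k') ! i ! j) = 0"
      proof (intro allI impI)
        fix j assume "j < nb (length ?rs) (length ?gs) (Suc k')"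
        then have "j < n" using hd_width[OF wM] unfolding n_def lrs lgs by simp
        then show "(\<Sum>i<Suc k'. x (0, i) * gbeta ?rs ?gs (Suc k') ! i ! j) = 0"
          using fun_cong[OF h, of j] unfolding \<phi>_def M k by simp
      qed
      from indep[OF z o this] show "\<forall>l<k. x (0, l) = 0" using k by simp
    next
      assume "\<forall>l<k. x (0, l) = 0"
      then show "\<phi> x = (\<lambda>_. 0)" unfolding \<phi>_def by (auto simp: fun_eq_iff)
    qed
    with rhs show "\<phi> x = (\<lambda>_. 0) \<longleftrightarrow> (\<forall>i<s. \<forall>l<t ! i. gam ^ (s - i) dvd x (i, l))" by simp
  qed
  have sub: "row_span M n \<subseteq> {v. \<forall>j\<ge>n. v j = 0}" unfolding row_span_def by auto
  have ct: "code_type gam s (S_beta es gam s k) n t"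
    unfolding code_type_def SB Let_def
    using lin img ker sub s unfolding DD_def by (auto simp: t_def intro!: exI[of _ \<phi>])
  show ?thesis using part1 ct unfolding n_def M_def t_def q_def by simp
qed

end
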